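(* Let $R$ be a generalized p.q.-Baer $*$-ring and $x\in R$. Then there exist a central projection $e\in R$ and $n\in\mathbb N$ such that (1) $x^ne=x^n$, and (2) for every $y\in R$, $(xR)^ny=\{0\}$ if and only if $ey=0$.
   Context: A $*$-ring is a ring with an involution; a projection is $e$ with $e=e^*=e^2$; a central projection is a projection commuting with all elements. $r_R(S)=\{a\in R: sa=0\ \forall s\in S\}$. A $*$-ring $R$ is a generalized p.q.-Baer $*$-ring if for every $x\in R$ there are $n\in\mathbb N$ and a projection $e$ with $r_R((xR)^n)=eR$ (equivalently, for every principal ideal $I$, $r_R(I^n)=eR$ for some $n$ and projection $e$). *)

theory Defs
  imports Main
begin

definition star_ring :: "('a::ring_1 \<Rightarrow> 'a) \<Rightarrow> bool" where
  "star_ring invl \<longleftrightarrow>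
     (\<forall>a b. invl (a + b) = invl a + invl b) \<and>
     (\<forall>a b. invl (a * b) = invl b * invl a) \<and>
     (\<forall>a. invl (invl a) = a)"

definition projection :: "('a::ring_1 \<Rightarrow> 'a) \<Rightarrow> 'a \<Rightarrow> bool" where
  "projection invl e \<longleftrightarrow> e = invl e \<and> e = e * e"

definition central_projection :: "('a::ring_1 \<Rightarrow> 'a) \<Rightarrow> 'a \<Rightarrow> bool" where
  "central_projection invl e \<longleftrightarrow> projection invl e \<and> (\<forall>a. e * a = a * e)"

definition rann :: "'a::ring_1 set \<Rightarrow> 'a set" where
  "rann S = {a. \<forall>s\<in>S. s * a = 0}"

definition rprinc :: "'a::ring_1 \<Rightarrow> 'a set" where
  "rprinc x = {x * r | r. True}"

text \<open>Product AB of two subsets: all finite sums of products a*b.\<close>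
inductive_set set_prod :: "'a::ring_1 set \<Rightarrow> 'a set \<Rightarrow> 'a set" for A B where
  zero: "0 \<in> set_prod A B"
| step: "s \<in> set_prod A B \<Longrightarrow> a \<in> A \<Longrightarrow> b \<in> B \<Longrightarrow> a * b + s \<in> set_prod A B"

text \<open>Power I^n of a subset (meaningful for n \<ge> 1; I^0 = R by convention).\<close>
fun set_pow :: "'a::ring_1 set \<Rightarrow> nat \<Rightarrow> 'a set" where
  "set_pow I 0 = UNIV"
| "set_pow I (Suc 0) = I"
| "set_pow I (Suc (Suc n)) = set_prod (set_pow I (Suc n)) I"

definition gen_pq_baer :: "('a::ring_1 \<Rightarrow> 'a) \<Rightarrow> bool" where
  "gen_pq_baer invl \<longleftrightarrow> star_ring invl \<and>
     (\<forall>x. \<exists>n e. n \<ge> 1 \<and> projection invl e \<and> rann (set_pow (rprinc x) n) = rprinc e)"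

end

theory Submission
  imports Defs
begin

lemma set_prod_rmult:
  assumes "\<And>b r. b \<in> B \<Longrightarrow> b * r \<in> B" and "s \<in> set_prod A B"
  shows "s * r \<in> set_prod A B"
  using assms(2)
proof induction
  case zero then show ?case by (simp add: set_prod.zero)
next
  case (step s a b)
  have "(a * b + s) * r = a * (b * r) + s * r" by (simp add: algebra_simps)
  then show ?case using step assms(1) set_prod.step by metis
qed

lemma set_pow_rmult:
  fixes x :: "'a::ring_1"
  shows "s \<in> set_pow (rprinc x) (Suc n) \<Longrightarrow> s * r \<in> set_pow (rprinc x) (Suc n)"
proof (induction n arbitrary: s)
  case 0
  then obtain t where "s = x * t" by (auto simp: rprinc_def)
  then show ?case by (auto simp: rprinc_def mult.assoc)
next
  case (Suc n)
  have "\<And>b r. b \<in> rprinc x \<Longrightarrow> b * r \<in> rprinc x"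
    by (auto simp: rprinc_def mult.assoc)
  then show ?case using Suc.prems set_prod_rmult[of "rprinc x"] by simp
qed

lemma pow_in_set_pow:
  fixes x :: "'a::ring_1"
  shows "x ^ Suc n \<in> set_pow (rprinc x) (Suc n)"
proof (induction n)
  case 0
  then show ?case by (auto simp: rprinc_def intro: exI[of _ 1])
next
  case (Suc n)
  have "x \<in> rprinc x" by (auto simp: rprinc_def intro: exI[of _ 1])
  then have "x ^ Suc n * x + 0 \<in> set_prod (set_pow (rprinc x) (Suc n)) (rprinc x)"
    using Suc set_prod.step set_prod.zero by blast
  then show ?case by (simp only: power_Suc2[of x "Suc n"] add_0_right set_pow.simps)
qed

lemma set_pow_nonempty:
  fixes x :: "'a::ring_1"
  shows "set_pow (rprinc x) (Suc n) \<noteq> {}"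
  using pow_in_set_pow by blast

theorem mainTheorem4:
  fixes invl :: "'a::ring_1 \<Rightarrow> 'a" and x :: 'a
  assumes "gen_pq_baer invl"
  shows "\<exists>e n. central_projection invl e \<and> n \<ge> 1 \<and> x ^ n * e = x ^ n \<and>
           (\<forall>y. (\<lambda>s. s * y) ` set_pow (rprinc x) n = {0} \<longleftrightarrow> e * y = 0)"
proof -
  have sr: "star_ring invl" using assms by (simp add: gen_pq_baer_def)
  have add: "\<And>a b. invl (a + b) = invl a + invl b"
    and mul: "\<And>a b. invl (a * b) = invl b * invl a"
    and inv: "\<And>a. invl (invl a) = a" using sr by (auto simp: star_ring_def)
  have inv1: "invl 1 = 1"
  proof -
    have "invl (invl 1 * 1) = invl 1 * invl (invl 1)" by (rule mul)
    then show ?thesis using inv by simp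
  qed
  have inv0: "invl 0 = 0" using add[of 0 0] by simp
  have invneg: "\<And>a. invl (- a) = - invl a"
    using add inv0 by (metis add.right_inverse add_eq_0_iff)
  obtain m f where m: "m \<ge> 1" and pf: "projection invl f"
    and ann: "rann (set_pow (rprinc x) m) = rprinc f"
    using assms unfolding gen_pq_baer_def by blast
  obtain k where mk: "m = Suc k" using m by (cases m) auto
  let ?P = "set_pow (rprinc x) m"
  have ff: "f * f = f" and fs: "invl f = f" using pf by (auto simp: projection_def)
  have inR: "\<And>y. y \<in> rprinc f \<longleftrightarrow> f * y = y"
  proof
    fix y assume "y \<in> rprinc f"
    then obtain t where "y = f * t" by (auto simp: rprinc_def)
    then show "f * y = y" using ff by (simp add: mult.assoc[symmetric])
  next
    fix y assume "f * y = y" then show "y \<in> rprinc f" unfolding rprinc_def by (auto intro: exI[of _ y])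
  qed
  have lid: "\<And>r a. a \<in> rann ?P \<Longrightarrow> r * a \<in> rann ?P"
  proof -
    fix r a assume "a \<in> rann ?P"
    then have h: "\<And>s. s \<in> ?P \<Longrightarrow> s * a = 0" by (auto simp: rann_def)
    show "r * a \<in> rann ?P" unfolding rann_def
    proof
      show "\<forall>s\<in>?P. s * (r * a) = 0"
        using h set_pow_rmult mk by (metis mult.assoc)
    qed
  qed
  have fin: "f \<in> rann ?P" using ann inR ff by auto
  have rf: "\<And>r. r * f = f * r * f"
  proof -
    fix r have "r * f \<in> rprinc f" using lid[OF fin] ann by auto
    then have "f * (r * f) = r * f" using inR by blast
    then show "r * f = f * r * f" by (simp add: mult.assoc)
  qed
  have fr: "\<And>r. f * r = f * r * f"
  proof -
    fix r
    have "invl (invl r * f) = invl (f * invl r * f)" using rf[of "invl r"] by simp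
    moreover have "invl (invl r * f) = f * r" using mul inv fs by simp
    moreover have "invl (f * invl r * f) = f * r * f" using mul inv fs by (simp add: mult.assoc)
    ultimately show "f * r = f * r * f" by simp
  qed
  have cen: "\<And>r. f * r = r * f" using rf fr by metis
  define e where "e = 1 - f"
  have ce: "central_projection invl e"
    unfolding central_projection_def projection_def e_def
  proof (intro conjI allI)
    show "1 - f = invl (1 - f)" using add[of 1 "- f"] invneg inv1 fs by simp
    show "1 - f = (1 - f) * (1 - f)" using ff by (simp add: algebra_simps)
    fix a show "(1 - f) * a = a * (1 - f)" using cen[of a] by (simp add: algebra_simps)
  qed
  have xm: "x ^ m * f = 0"
    using fin pow_in_set_pow[of x k] mk by (auto simp: rann_def)
  have "x ^ m * e = x ^ m" using xm by (simp add: e_def algebra_simps)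
  moreover have "\<forall>y. (\<lambda>s. s * y) ` ?P = {0} \<longleftrightarrow> e * y = 0"
  proof
    fix y
    have "(\<lambda>s. s * y) ` ?P = {0} \<longleftrightarrow> y \<in> rann ?P"
      using set_pow_nonempty[of x k] mk by (auto simp: rann_def)
    also have "\<dots> \<longleftrightarrow> f * y = y" using ann inR by simp
    also have "\<dots> \<longleftrightarrow> e * y = 0" by (auto simp: e_def algebra_simps)
    finally show "(\<lambda>s. s * y) ` ?P = {0} \<longleftrightarrow> e * y = 0" .
  qed
  ultimately show ?thesis using ce m by blast
qed

end
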